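(* Let $\beta>0$, let $n$ be a positive integer, $g\in H(\mathbb{D})$, and $I_g^{n,0}f=I^n(fg)$. Then (i) $I_g^{n,0}:\mathcal{B}\to\mathcal{B}^{\beta}$ is bounded if and only if $\sup_{z\in\mathbb{D}}(1-|z|^2)^{n+\beta-1}\log\frac{2}{1-|z|^2}|g(z)|<\infty$; (ii) $I_g^{n,0}:\mathcal{B}\to\mathcal{B}^{\beta}$ is compact if and only if $\lim_{|z|\to1^-}(1-|z|^2)^{n+\beta-1}\log\frac{2}{1-|z|^2}|g(z)|=0$.
   Context: $\mathbb{D}$ is the open unit disc in $\mathbb{C}$ and $H(\mathbb{D})$ the space of analytic functions on $\mathbb{D}$. For $\gamma>0$, $\mathcal{B}^{\gamma}$ is the Banach space of $f\in H(\mathbb{D})$ with $\|f\|_{\mathcal{B}^{\gamma}}=|f(0)|+\sup_{z\in\mathbb{D}}(1-|z|^2)^{\gamma}|f'(z)|<\infty$; $\mathcal{B}=\mathcal{B}^1$ is the Bloch space. $I$ is the integration operator $If(z)=\int_0^z f(\zeta)\,d\zeta$ and $I^n$ its $n$th iterate. An operator is bounded (compact) from $\mathcal{B}$ to $\mathcal{B}^\beta$ if it maps $\mathcal{B}$ into $\mathcal{B}^\beta$ and is bounded (compact) as a linear operator between these Banach spaces. *)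

theory Defs
  imports "HOL-Complex_Analysis.Complex_Analysis"
begin

abbreviation disc :: "complex set" where "disc \<equiv> ball 0 1"

definition bloch :: "real \<Rightarrow> (complex \<Rightarrow> complex) set" where
  "bloch \<gamma> = {f. f holomorphic_on disc \<and>
     bdd_above ((\<lambda>z. (1 - (cmod z)\<^sup>2) powr \<gamma> * cmod (deriv f z)) ` disc)}"

definition bloch_norm :: "real \<Rightarrow> (complex \<Rightarrow> complex) \<Rightarrow> real" where
  "bloch_norm \<gamma> f = cmod (f 0) +
     (SUP z\<in>disc. (1 - (cmod z)\<^sup>2) powr \<gamma> * cmod (deriv f z))"

definition intop :: "(complex \<Rightarrow> complex) \<Rightarrow> (complex \<Rightarrow> complex)" where
  "intop f = (\<lambda>z. contour_integral (linepath 0 z) f)"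

definition bounded_bloch_op :: "real \<Rightarrow> real \<Rightarrow> ((complex \<Rightarrow> complex) \<Rightarrow> (complex \<Rightarrow> complex)) \<Rightarrow> bool" where
  "bounded_bloch_op \<alpha> \<beta> T \<longleftrightarrow> (\<forall>f\<in>bloch \<alpha>. T f \<in> bloch \<beta>) \<and>
     (\<exists>C. \<forall>f\<in>bloch \<alpha>. bloch_norm \<beta> (T f) \<le> C * bloch_norm \<alpha> f)"

text \<open>T is compact from B^alpha to B^beta: it maps B^alpha into B^beta and the image
  of the closed unit ball is relatively compact in B^beta (sequential form).\<close>
definition compact_bloch_op :: "real \<Rightarrow> real \<Rightarrow> ((complex \<Rightarrow> complex) \<Rightarrow> (complex \<Rightarrow> complex)) \<Rightarrow> bool" where
  "compact_bloch_op \<alpha> \<beta> T \<longleftrightarrow> (\<forall>f\<in>bloch \<alpha>. T f \<in> bloch \<beta>) \<and>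
     (\<forall>F :: nat \<Rightarrow> complex \<Rightarrow> complex. (\<forall>k. F k \<in> bloch \<alpha> \<and> bloch_norm \<alpha> (F k) \<le> 1) \<longrightarrow>
        (\<exists>(r :: nat \<Rightarrow> nat) h. strict_mono r \<and> h \<in> bloch \<beta> \<and>
           (\<lambda>k. bloch_norm \<beta> (\<lambda>z. T (F (r k)) z - h z)) \<longlonglongrightarrow> 0))"

end

theory Submission
  imports Defs
begin


lemma disc_weight_pos: "z \<in> disc \<Longrightarrow> 0 < 1 - (cmod z)\<^sup>2"
proof -
  assume "z \<in> disc"
  then have "cmod z < 1" by simp
  then have "(cmod z)\<^sup>2 < 1" by (simp add: power_less_one_iff abs_less_iff)
  then show ?thesis by simp
qed

lemma disc_weight_le1: "1 - (cmod z)\<^sup>2 \<le> 1"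
  by simp

lemma intop_has_deriv:
  assumes "f holomorphic_on disc" "z \<in> disc"
  shows "(intop f has_field_derivative f z) (at z)"
proof -
  obtain G where G: "\<And>x. x \<in> disc \<Longrightarrow> (G has_field_derivative f x) (at x within disc)"
    using holomorphic_convex_primitive'[OF convex_ball open_ball assms(1)] by blast
  have eq: "intop f w = G w - G 0" if "w \<in> disc" for w
  proof -
    have "closed_segment 0 w \<subseteq> disc"
      using that by (simp add: closed_segment_subset convex_ball)
    then have "(f has_contour_integral G w - G 0) (linepath 0 w)"
      using contour_integral_primitive[OF G, of "linepath 0 w"] by simp
    then show ?thesis unfolding intop_def using contour_integral_unique by blast
  qed
  have "(G has_field_derivative f z) (at z)"
    using G[OF assms(2)] unfolding at_within_open[OF assms(2) open_ball] .
  then have "((\<lambda>w. G w - G 0) has_field_derivative f z) (at z)"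
    using DERIV_diff[OF _ DERIV_const[of "G 0"]] by simp
  then show ?thesis
    by (rule has_field_derivative_transform_within_open[OF _ open_ball assms(2)]) (simp add: eq)
qed

lemma intop_holo: assumes "f holomorphic_on disc" shows "intop f holomorphic_on disc"
  unfolding holomorphic_on_open[OF open_ball] using intop_has_deriv[OF assms] by blast

lemma intop_deriv: "f holomorphic_on disc \<Longrightarrow> z \<in> disc \<Longrightarrow> deriv (intop f) z = f z"
  using intop_has_deriv DERIV_imp_deriv by blast

lemma intop_0 [simp]: "intop f 0 = 0"
  by (simp add: intop_def)

lemma iter_holo: "f holomorphic_on disc \<Longrightarrow> (intop ^^ k) f holomorphic_on disc"
  by (induction k) (auto intro: intop_holo)

lemma iter_0: "k > 0 \<Longrightarrow> (intop ^^ k) f 0 = 0"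
  by (cases k) auto

lemma iter_deriv: "f holomorphic_on disc \<Longrightarrow> z \<in> disc \<Longrightarrow> k > 0 \<Longrightarrow>
   deriv ((intop ^^ k) f) z = (intop ^^ (k - 1)) f z"
  by (cases k) (auto simp: intop_deriv iter_holo)

lemma intop_cong: "(\<And>w. w \<in> disc \<Longrightarrow> f w = h w) \<Longrightarrow> z \<in> disc \<Longrightarrow> intop f z = intop h z"
  unfolding intop_def
proof (rule contour_integral_eq)
  fix x assume "(\<And>w. w \<in> disc \<Longrightarrow> f w = h w)" "z \<in> disc" "x \<in> path_image (linepath 0 z)"
  moreover have "closed_segment 0 z \<subseteq> disc"
    using \<open>z \<in> disc\<close> by (simp add: closed_segment_subset convex_ball)
  ultimately show "f x = h x" by auto
qed

lemma iter_cong: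
  assumes "\<And>w. w \<in> disc \<Longrightarrow> f w = h w"
  shows "z \<in> disc \<Longrightarrow> (intop ^^ k) f z = (intop ^^ k) h z"
proof (induction k arbitrary: z)
  case 0 then show ?case using assms by simp
next
  case (Suc k) show ?case unfolding funpow.simps comp_def by (rule intop_cong[OF Suc.IH Suc.prems])
qed

lemma intop_diff:
  assumes "f holomorphic_on disc" "h holomorphic_on disc" "z \<in> disc"
  shows "intop (\<lambda>w. f w - h w) z = intop f z - intop h z"
proof -
  have seg: "closed_segment 0 z \<subseteq> disc"
    using assms(3) by (simp add: closed_segment_subset convex_ball)
  have "f contour_integrable_on linepath 0 z" "h contour_integrable_on linepath 0 z"
    using contour_integrable_continuous_linepath holomorphic_on_imp_continuous_on
      continuous_on_subset assms seg by blast+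
  then show ?thesis unfolding intop_def by (rule contour_integral_diff)
qed

lemma iter_diff:
  assumes "f holomorphic_on disc" "h holomorphic_on disc" "z \<in> disc"
  shows "(intop ^^ k) (\<lambda>w. f w - h w) z = (intop ^^ k) f z - (intop ^^ k) h z"
  using assms(3)
proof (induction k arbitrary: z)
  case 0 then show ?case by simp
next
  case (Suc k)
  have "(intop ^^ Suc k) (\<lambda>w. f w - h w) z = intop (\<lambda>w. (intop ^^ k) f w - (intop ^^ k) h w) z"
    unfolding funpow.simps comp_def by (rule intop_cong[OF Suc.IH Suc.prems])
  also have "\<dots> = (intop ^^ Suc k) f z - (intop ^^ Suc k) h z"
    unfolding funpow.simps comp_def by (rule intop_diff[OF iter_holo[OF assms(1)] iter_holo[OF assms(2)] Suc.prems])
  finally show ?case .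
qed



lemma mv_disc:
  assumes holo: "f holomorphic_on disc" and z: "z \<in> disc"
   and phic: "continuous_on {0..1} \<phi>"
   and phid: "\<And>t. 0 < t \<Longrightarrow> t < 1 \<Longrightarrow> (\<phi> has_real_derivative \<phi>' t) (at t)"
   and bnd: "\<And>t. 0 < t \<Longrightarrow> t < 1 \<Longrightarrow> cmod z * cmod (deriv f (of_real t * z)) \<le> \<phi>' t"
  shows "cmod (f z - f 0) \<le> \<phi> 1 - \<phi> 0"
proof -
  define p where "p = (\<lambda>t::real. f (of_real t * z))"
  have inD: "of_real t * z \<in> disc" if "t \<in> {0..1}" for t
  proof -
    have "cmod (of_real t * z) = \<bar>t\<bar> * cmod z" by (simp add: norm_mult)
    also have "\<dots> \<le> cmod z" using that by (simp add: mult_left_le_one_le)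
    finally show ?thesis using z by simp
  qed
  have "norm (p 1 - p 0) \<le> \<phi> 1 - \<phi> 0"
  proof (rule differentiable_bound_general[of 0 1 p \<phi> "\<lambda>t. z * deriv f (of_real t * z)" \<phi>'])
    show "continuous_on {0..1} p"
      unfolding p_def
      by (rule continuous_on_compose2[OF holomorphic_on_imp_continuous_on[OF holo]])
         (auto intro!: continuous_intros inD)
    show "continuous_on {0..1} \<phi>" by (fact phic)
    fix t :: real assume t: "0 < t" "t < 1"
    then have tD: "of_real t * z \<in> disc" using inD by auto
    have d1: "((\<lambda>t. of_real t * z) has_vector_derivative z) (at t)"
      by (auto intro!: derivative_eq_intros simp: has_vector_derivative_def scaleR_conv_of_real)
    have d2: "(f has_field_derivative deriv f (of_real t * z)) (at (of_real t * z))"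
      by (rule holomorphic_derivI[OF holo open_ball tD])
    show "(p has_vector_derivative z * deriv f (of_real t * z)) (at t)"
      using field_vector_diff_chain_at[OF d1 d2] by (simp add: p_def comp_def)
    show "(\<phi> has_vector_derivative \<phi>' t) (at t)"
      using phid[OF t] by (simp add: has_real_derivative_iff_has_vector_derivative)
    show "norm (z * deriv f (of_real t * z)) \<le> \<phi>' t"
      using bnd[OF t] by (simp add: norm_mult)
  qed simp
  then show ?thesis by (simp add: p_def)
qed



lemma deriv_weighted:
  assumes holo: "H holomorphic_on disc" and g0: "\<gamma> \<ge> 0"
    and bnd: "\<And>w. w \<in> disc \<Longrightarrow> (1 - (cmod w)\<^sup>2) powr \<gamma> * cmod (H w) \<le> M"
    and z: "z \<in> disc"
  shows "(1 - (cmod z)\<^sup>2) powr (\<gamma> + 1) * cmod (deriv H z) \<le> 4 powr (\<gamma> + 1) * M"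
proof -
  define d where "d = 1 - (cmod z)\<^sup>2"
  define \<rho> where "\<rho> = (1 - cmod z) / 2"
  have zl: "cmod z < 1" using z by simp
  have dpos: "d > 0" unfolding d_def using disc_weight_pos[OF z] .
  have rpos: "\<rho> > 0" using zl by (simp add: \<rho>_def)
  have d_le: "d \<le> 2 * (1 - cmod z)"
  proof -
    have "d = (1 - cmod z) * (1 + cmod z)" by (simp add: d_def power2_eq_square algebra_simps)
    also have "\<dots> \<le> (1 - cmod z) * 2" using zl by (intro mult_left_mono) auto
    finally show ?thesis by simp
  qed
  have M0: "M \<ge> 0" using bnd[of 0] by simp (meson norm_ge_zero order_trans)
  have cb: "cball z \<rho> \<subseteq> disc"
  proof
    fix w assume "w \<in> cball z \<rho>"
    then have "cmod (z - w) \<le> \<rho>" by (simp add: dist_norm)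
    then have "cmod w \<le> cmod z + \<rho>" using norm_triangle_ineq3[of z w] norm_minus_commute[of z w]
      by (smt (verit) norm_triangle_ineq2)
    then show "w \<in> disc" using zl by (auto simp: \<rho>_def field_simps)
  qed
  define B where "B = M * 4 powr \<gamma> / d powr \<gamma>"
  have Hb: "cmod (H w) \<le> B" if w: "cmod (z - w) = \<rho>" for w
  proof -
    have wD: "w \<in> disc" using cb w by (auto simp: dist_norm)
    define e where "e = 1 - (cmod w)\<^sup>2"
    have epos: "e > 0" unfolding e_def using disc_weight_pos[OF wD] .
    have "cmod w \<le> cmod z + \<rho>" using w norm_triangle_ineq3[of z w] norm_minus_commute[of z w]
      by (smt (verit) norm_triangle_ineq2)
    then have "1 - cmod w \<ge> (1 - cmod z) / 2" by (auto simp: \<rho>_def field_simps)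
    moreover have "e \<ge> 1 - cmod w"
    proof -
      have "cmod w < 1" using wD by simp
      then have "(cmod w)\<^sup>2 \<le> cmod w" by (simp add: power2_eq_square mult_le_one mult_left_le_one_le)
      then show ?thesis by (simp add: e_def)
    qed
    ultimately have ed: "d / 4 \<le> e" using d_le by linarith
    have "(d / 4) powr \<gamma> \<le> e powr \<gamma>" using ed dpos g0 by (intro powr_mono2) auto
    moreover have "(d/4) powr \<gamma> = d powr \<gamma> / 4 powr \<gamma>" using dpos by (simp add: powr_divide)
    ultimately have ineq: "d powr \<gamma> / 4 powr \<gamma> \<le> e powr \<gamma>" by simp
    have "e powr \<gamma> * cmod (H w) \<le> M" using bnd[OF wD] by (simp add: e_def)
    then have "(d powr \<gamma> / 4 powr \<gamma>) * cmod (H w) \<le> M"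
      by (meson ineq mult_right_mono norm_ge_zero order_trans)
    then show ?thesis using dpos by (simp add: B_def field_simps)
  qed
  have "cmod ((deriv ^^ 1) H z) \<le> fact 1 * B / \<rho> ^ 1"
    by (rule Cauchy_inequality[OF holomorphic_on_subset[OF holo] continuous_on_subset[OF holomorphic_on_imp_continuous_on[OF holo] cb] rpos Hb])
       (use cb ball_subset_cball in blast)
  then have D: "cmod (deriv H z) \<le> B / \<rho>" by simp
  have "d powr (\<gamma> + 1) * cmod (deriv H z) \<le> d powr (\<gamma> + 1) * (B / \<rho>)"
    using D by (intro mult_left_mono) auto
  also have "\<dots> = M * 4 powr \<gamma> * (d / \<rho>)"
    using dpos rpos by (simp add: B_def powr_add field_simps)
  also have "\<dots> \<le> M * 4 powr \<gamma> * 4"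
  proof -
    have "d / \<rho> \<le> 4" using d_le rpos by (simp add: \<rho>_def field_simps)
    then show ?thesis using M0 by (intro mult_left_mono) auto
  qed
  also have "\<dots> = 4 powr (\<gamma> + 1) * M" by (simp add: powr_add)
  finally show ?thesis by (simp add: d_def)
qed



lemma int_weighted:
  assumes holo: "H holomorphic_on disc" and gpos: "\<gamma> > 0"
    and bnd: "\<And>w. w \<in> disc \<Longrightarrow> (1 - (cmod w)\<^sup>2) powr (\<gamma> + 1) * cmod (H w) \<le> M"
    and z: "z \<in> disc"
  shows "(1 - (cmod z)\<^sup>2) powr \<gamma> * cmod (intop H z) \<le> (2 powr \<gamma> / \<gamma>) * M"
proof -
  define r where "r = cmod z"
  have r0: "0 \<le> r" and r1: "r < 1" using z by (auto simp: r_def)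
  have M0: "M \<ge> 0" using bnd[of 0] by simp (meson norm_ge_zero order_trans)
  define \<phi> where "\<phi> = (\<lambda>t::real. M / \<gamma> * (1 - t * r) powr (- \<gamma>))"
  define \<phi>' where "\<phi>' = (\<lambda>t::real. M * r * (1 - t * r) powr (- \<gamma> - 1))"
  have pos: "0 < 1 - t * r" if "t \<le> 1" for t :: real
  proof -
    have "t * r \<le> r" using mult_right_mono[OF that r0] by simp
    then show ?thesis using r1 by simp
  qed
  have "cmod (intop H z - intop H 0) \<le> \<phi> 1 - \<phi> 0"
  proof (rule mv_disc[OF intop_holo[OF holo] z, of \<phi> \<phi>'])
    show "continuous_on {0..1} \<phi>"
      unfolding \<phi>_def by (auto intro!: continuous_intros) (use pos gpos in force)+
    fix t :: real assume t: "0 < t" "t < 1"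
    have p: "0 < 1 - t * r" using pos t by simp
    show "(\<phi> has_real_derivative \<phi>' t) (at t)"
      unfolding \<phi>_def \<phi>'_def using p gpos
      by (auto intro!: derivative_eq_intros simp: field_simps)
    have wD: "of_real t * z \<in> disc"
    proof -
      have "cmod (of_real t * z) = t * r" using t by (simp add: norm_mult r_def)
      then show ?thesis using pos[of t] t r1 by simp
    qed
    have nw: "cmod (of_real t * z) = t * r" using t by (simp add: norm_mult r_def)
    have e: "1 - t * r \<le> 1 - (cmod (of_real t * z))\<^sup>2"
    proof -
      have "t * r \<le> 1" using p by simp
      then have "(t * r)\<^sup>2 \<le> t * r" using t r0 by (simp add: power2_eq_square mult_left_le_one_le)
      then show ?thesis using nw by simp
    qed
    have "(1 - t * r) powr (\<gamma> + 1) \<le> (1 - (cmod (of_real t * z))\<^sup>2) powr (\<gamma> + 1)"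
      using e p gpos by (intro powr_mono2) auto
    then have "(1 - t * r) powr (\<gamma> + 1) * cmod (H (of_real t * z)) \<le> M"
      using bnd[OF wD] by (meson mult_right_mono norm_ge_zero order_trans)
    then have Hb: "cmod (H (of_real t * z)) \<le> M * (1 - t * r) powr (- \<gamma> - 1)"
      using p by (simp add: powr_minus_divide field_simps powr_diff powr_add)
    show "cmod z * cmod (deriv (intop H) (of_real t * z)) \<le> \<phi>' t"
      unfolding intop_deriv[OF holo wD] \<phi>'_def r_def[symmetric]
      using mult_left_mono[OF Hb r0] by (simp add: mult_ac)
  qed
  then have I: "cmod (intop H z) \<le> M / \<gamma> * (1 - r) powr (- \<gamma>) - M / \<gamma>"
    by (simp add: \<phi>_def)
  have "(1 - r\<^sup>2) powr \<gamma> * cmod (intop H z) \<le> (1 - r\<^sup>2) powr \<gamma> * (M / \<gamma> * (1 - r) powr (- \<gamma>))"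
  proof -
    have "cmod (intop H z) \<le> M / \<gamma> * (1 - r) powr (- \<gamma>)"
      using I divide_nonneg_pos[OF M0 gpos] by linarith
    then show ?thesis by (intro mult_left_mono) auto
  qed
  also have "\<dots> = M / \<gamma> * ((1 - r\<^sup>2) / (1 - r)) powr \<gamma>"
    using r1 r0 by (simp add: powr_minus_divide powr_divide)
  also have "(1 - r\<^sup>2) / (1 - r) = 1 + r"
    using r1 by (simp add: power2_eq_square field_simps)
  also have "M / \<gamma> * (1 + r) powr \<gamma> \<le> M / \<gamma> * 2 powr \<gamma>"
    using r1 r0 M0 gpos by (intro mult_left_mono powr_mono2) auto
  finally show ?thesis by (simp add: r_def mult.commute)
qed



lemma iter_int:
  "\<gamma> > 0 \<Longrightarrow> \<exists>C>0. \<forall>H M. H holomorphic_on disc \<longrightarrow>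
     (\<forall>w\<in>disc. (1 - (cmod w)\<^sup>2) powr (\<gamma> + real k) * cmod (H w) \<le> M) \<longrightarrow>
     (\<forall>z\<in>disc. (1 - (cmod z)\<^sup>2) powr \<gamma> * cmod ((intop ^^ k) H z) \<le> C * M)"
proof (induction k arbitrary: \<gamma>)
  case 0
  show ?case by (rule exI[of _ 1]) simp
next
  case (Suc k)
  from Suc.prems have g1: "\<gamma> + 1 > 0" by simp
  obtain C1 where C1: "C1 > 0" and H1: "\<And>H M. H holomorphic_on disc \<Longrightarrow>
     (\<forall>w\<in>disc. (1 - (cmod w)\<^sup>2) powr (\<gamma> + 1 + real k) * cmod (H w) \<le> M) \<Longrightarrow>
     (\<forall>z\<in>disc. (1 - (cmod z)\<^sup>2) powr (\<gamma> + 1) * cmod ((intop ^^ k) H z) \<le> C1 * M)"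
    using Suc.IH[OF g1] by blast
  show ?case
  proof (intro exI[of _ "2 powr \<gamma> / \<gamma> * C1"] conjI allI impI ballI)
    show "0 < 2 powr \<gamma> / \<gamma> * C1" using C1 Suc.prems by simp
    fix H M z assume holo: "H holomorphic_on disc"
      and hb: "\<forall>w\<in>disc. (1 - (cmod w)\<^sup>2) powr (\<gamma> + real (Suc k)) * cmod (H w) \<le> M"
      and z: "z \<in> disc"
    have ee: "\<gamma> + real (Suc k) = \<gamma> + 1 + real k" by simp
    have hb': "\<forall>w\<in>disc. (1 - (cmod w)\<^sup>2) powr (\<gamma> + 1 + real k) * cmod (H w) \<le> M"
      using hb unfolding ee .
    have "(1 - (cmod z)\<^sup>2) powr \<gamma> * cmod (intop ((intop ^^ k) H) z) \<le> (2 powr \<gamma> / \<gamma>) * (C1 * M)"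
      by (rule int_weighted[OF iter_holo[OF holo] Suc.prems _ z]) (use H1[OF holo hb'] in auto)
    then show "(1 - (cmod z)\<^sup>2) powr \<gamma> * cmod ((intop ^^ Suc k) H z) \<le> 2 powr \<gamma> / \<gamma> * C1 * M"
      by (simp add: mult.assoc)
  qed
qed

lemma iter_der:
  "\<gamma> > 0 \<Longrightarrow> \<exists>C>0. \<forall>H M. H holomorphic_on disc \<longrightarrow>
     (\<forall>w\<in>disc. (1 - (cmod w)\<^sup>2) powr \<gamma> * cmod ((intop ^^ k) H w) \<le> M) \<longrightarrow>
     (\<forall>z\<in>disc. (1 - (cmod z)\<^sup>2) powr (\<gamma> + real k) * cmod (H z) \<le> C * M)"
proof (induction k arbitrary: \<gamma>)
  case 0
  show ?case by (rule exI[of _ 1]) simp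
next
  case (Suc k)
  from Suc.prems have g1: "\<gamma> + 1 > 0" by simp
  obtain C1 where C1: "C1 > 0" and H1: "\<And>H M. H holomorphic_on disc \<Longrightarrow>
     (\<forall>w\<in>disc. (1 - (cmod w)\<^sup>2) powr (\<gamma> + 1) * cmod ((intop ^^ k) H w) \<le> M) \<Longrightarrow>
     (\<forall>z\<in>disc. (1 - (cmod z)\<^sup>2) powr (\<gamma> + 1 + real k) * cmod (H z) \<le> C1 * M)"
    using Suc.IH[OF g1] by blast
  show ?case
  proof (intro exI[of _ "C1 * 4 powr (\<gamma> + 1)"] conjI allI impI ballI)
    show "0 < C1 * 4 powr (\<gamma> + 1)" using C1 by simp
    fix H M z assume holo: "H holomorphic_on disc"
      and hb: "\<forall>w\<in>disc. (1 - (cmod w)\<^sup>2) powr \<gamma> * cmod ((intop ^^ Suc k) H w) \<le> M"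
      and z: "z \<in> disc"
    have "\<forall>w\<in>disc. (1 - (cmod w)\<^sup>2) powr (\<gamma> + 1) * cmod ((intop ^^ k) H w) \<le> 4 powr (\<gamma> + 1) * M"
    proof
      fix w assume w: "w \<in> disc"
      have "(1 - (cmod w)\<^sup>2) powr (\<gamma> + 1) * cmod (deriv (intop ((intop ^^ k) H)) w) \<le> 4 powr (\<gamma> + 1) * M"
        by (rule deriv_weighted[OF intop_holo[OF iter_holo[OF holo]] _ _ w]) (use hb Suc.prems in auto)
      then show "(1 - (cmod w)\<^sup>2) powr (\<gamma> + 1) * cmod ((intop ^^ k) H w) \<le> 4 powr (\<gamma> + 1) * M"
        using intop_deriv[OF iter_holo[OF holo] w] by simp
    qed
    from H1[OF holo this] z
    have "(1 - (cmod z)\<^sup>2) powr (\<gamma> + 1 + real k) * cmod (H z) \<le> C1 * (4 powr (\<gamma> + 1) * M)" by blast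
    moreover have ee: "\<gamma> + real (Suc k) = \<gamma> + 1 + real k" by simp
    ultimately show "(1 - (cmod z)\<^sup>2) powr (\<gamma> + real (Suc k)) * cmod (H z) \<le> C1 * 4 powr (\<gamma> + 1) * M"
      by (simp only: ee mult.assoc)
  qed
qed

lemma bloch_normI:
  assumes "\<And>z. z \<in> disc \<Longrightarrow> (1 - (cmod z)\<^sup>2) powr \<gamma> * cmod (deriv f z) \<le> B"
  shows "(SUP z\<in>disc. (1 - (cmod z)\<^sup>2) powr \<gamma> * cmod (deriv f z)) \<le> B"
  by (rule cSUP_least) (use assms in auto)

lemma bloch_upper:
  assumes "f \<in> bloch \<gamma>" "z \<in> disc"
  shows "(1 - (cmod z)\<^sup>2) powr \<gamma> * cmod (deriv f z) \<le> (SUP z\<in>disc. (1 - (cmod z)\<^sup>2) powr \<gamma> * cmod (deriv f z))"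
  by (rule cSUP_upper) (use assms in \<open>auto simp: bloch_def\<close>)

lemma bloch_sup_nonneg:
  assumes "f \<in> bloch \<gamma>"
  shows "0 \<le> (SUP z\<in>disc. (1 - (cmod z)\<^sup>2) powr \<gamma> * cmod (deriv f z))"
  using bloch_upper[OF assms, of 0] by simp (smt (verit) norm_ge_zero)

lemma bloch_norm_nonneg: "f \<in> bloch \<gamma> \<Longrightarrow> 0 \<le> bloch_norm \<gamma> f"
  unfolding bloch_norm_def using bloch_sup_nonneg[of f \<gamma>] by (smt (verit) norm_ge_zero)

lemma bloch_norm_upper:
  assumes "f \<in> bloch \<gamma>" "z \<in> disc"
  shows "(1 - (cmod z)\<^sup>2) powr \<gamma> * cmod (deriv f z) \<le> bloch_norm \<gamma> f"
  using bloch_upper[OF assms] unfolding bloch_norm_def by (smt (verit) norm_ge_zero)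

lemma suff:
  assumes "\<beta> > 0" "n > 0"
  shows "\<exists>C>0. \<forall>H M. H holomorphic_on disc \<longrightarrow>
     (\<forall>w\<in>disc. (1 - (cmod w)\<^sup>2) powr (real n + \<beta> - 1) * cmod (H w) \<le> M) \<longrightarrow>
     (intop ^^ n) H \<in> bloch \<beta> \<and> bloch_norm \<beta> ((intop ^^ n) H) \<le> C * M"
proof -
  have ex: "\<beta> + real (n - 1) = real n + \<beta> - 1" using assms(2) by (simp add: of_nat_diff)
  obtain C where C: "C > 0" and HC: "\<And>H M. H holomorphic_on disc \<Longrightarrow>
     (\<forall>w\<in>disc. (1 - (cmod w)\<^sup>2) powr (real n + \<beta> - 1) * cmod (H w) \<le> M) \<Longrightarrow>
     (\<forall>z\<in>disc. (1 - (cmod z)\<^sup>2) powr \<beta> * cmod ((intop ^^ (n - 1)) H z) \<le> C * M)"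
    using iter_int[OF assms(1), of "n - 1"] unfolding ex by blast
  show ?thesis
  proof (intro exI[of _ C] conjI allI impI C)
    fix H M assume holo: "H holomorphic_on disc"
      and hb: "\<forall>w\<in>disc. (1 - (cmod w)\<^sup>2) powr (real n + \<beta> - 1) * cmod (H w) \<le> M"
    have b: "(1 - (cmod z)\<^sup>2) powr \<beta> * cmod (deriv ((intop ^^ n) H) z) \<le> C * M" if z: "z \<in> disc" for z
      using HC[OF holo hb] z iter_deriv[OF holo z assms(2)] by simp
    show "(intop ^^ n) H \<in> bloch \<beta>"
      unfolding bloch_def using iter_holo[OF holo] b by (auto intro!: bdd_aboveI2)
    show "bloch_norm \<beta> ((intop ^^ n) H) \<le> C * M"
      unfolding bloch_norm_def using iter_0[OF assms(2)] bloch_normI[OF b] by simp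
  qed
qed

lemma nec:
  assumes "\<beta> > 0" "n > 0"
  shows "\<exists>C>0. \<forall>H. H holomorphic_on disc \<longrightarrow> (intop ^^ n) H \<in> bloch \<beta> \<longrightarrow>
     (\<forall>z\<in>disc. (1 - (cmod z)\<^sup>2) powr (real n + \<beta> - 1) * cmod (H z) \<le> C * bloch_norm \<beta> ((intop ^^ n) H))"
proof -
  have ex: "\<beta> + real (n - 1) = real n + \<beta> - 1" using assms(2) by (simp add: of_nat_diff)
  obtain C where C: "C > 0" and HC: "\<And>H M. H holomorphic_on disc \<Longrightarrow>
     (\<forall>w\<in>disc. (1 - (cmod w)\<^sup>2) powr \<beta> * cmod ((intop ^^ (n - 1)) H w) \<le> M) \<Longrightarrow>
     (\<forall>z\<in>disc. (1 - (cmod z)\<^sup>2) powr (real n + \<beta> - 1) * cmod (H z) \<le> C * M)"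
    using iter_der[OF assms(1), of "n - 1"] unfolding ex by blast
  show ?thesis
  proof (intro exI[of _ C] conjI allI impI C)
    fix H assume holo: "H holomorphic_on disc" and bl: "(intop ^^ n) H \<in> bloch \<beta>"
    have "\<forall>w\<in>disc. (1 - (cmod w)\<^sup>2) powr \<beta> * cmod ((intop ^^ (n - 1)) H w) \<le> bloch_norm \<beta> ((intop ^^ n) H)"
      using bloch_norm_upper[OF bl] iter_deriv[OF holo _ assms(2)] by simp
    from HC[OF holo this]
    show "\<forall>z\<in>disc. (1 - (cmod z)\<^sup>2) powr (real n + \<beta> - 1) * cmod (H z) \<le> C * bloch_norm \<beta> ((intop ^^ n) H)"
      by simp
  qed
qed



definition Lw :: "complex \<Rightarrow> real" where "Lw z = ln (2 / (1 - (cmod z)\<^sup>2))"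

lemma Lw_ge: assumes "z \<in> disc" shows "ln 2 \<le> Lw z" "- ln (1 - cmod z) \<le> Lw z"
proof -
  have d: "0 < 1 - (cmod z)\<^sup>2" "1 - (cmod z)\<^sup>2 \<le> 1" using disc_weight_pos[OF assms] by auto
  have "2 \<le> 2 / (1 - (cmod z)\<^sup>2)" using d by (simp add: field_simps)
  then show "ln 2 \<le> Lw z" unfolding Lw_def using d by (subst ln_le_cancel_iff) auto
  have z1: "cmod z < 1" using assms by simp
  have sq: "0 \<le> (1 - cmod z)\<^sup>2" by simp
  have "1 - (cmod z)\<^sup>2 \<le> 2 * (1 - cmod z)"
    using sq by (simp add: power2_eq_square algebra_simps)
  then have "1 / (1 - cmod z) \<le> 2 / (1 - (cmod z)\<^sup>2)" using d z1 by (simp add: field_simps)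
  then have "ln (1 / (1 - cmod z)) \<le> Lw z" unfolding Lw_def using z1 d by (subst ln_le_cancel_iff) auto
  then show "- ln (1 - cmod z) \<le> Lw z" using z1 by (simp add: ln_div)
qed

lemma Lw_pos: "z \<in> disc \<Longrightarrow> 0 < Lw z"
  using Lw_ge(1)[of z] ln2_ge_two_thirds by linarith

lemma bloch_growth:
  assumes bl: "f \<in> bloch 1" and z: "z \<in> disc"
  shows "cmod (f z) \<le> bloch_norm 1 f * Lw z / ln 2"
proof -
  define S where "S = (SUP z\<in>disc. (1 - (cmod z)\<^sup>2) powr 1 * cmod (deriv f z))"
  have S0: "S \<ge> 0" unfolding S_def by (rule bloch_sup_nonneg[OF bl])
  have holo: "f holomorphic_on disc" using bl by (simp add: bloch_def)
  define r where "r = cmod z"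
  have r0: "0 \<le> r" and r1: "r < 1" using z by (auto simp: r_def)
  have pos: "0 < 1 - t * r" if "t \<le> 1" for t :: real
  proof -
    have "t * r \<le> r" using mult_right_mono[OF that r0] by simp
    then show ?thesis using r1 by simp
  qed
  define \<phi> where "\<phi> = (\<lambda>t::real. - S * ln (1 - t * r))"
  define \<phi>' where "\<phi>' = (\<lambda>t::real. S * r / (1 - t * r))"
  have "cmod (f z - f 0) \<le> \<phi> 1 - \<phi> 0"
  proof (rule mv_disc[OF holo z, of \<phi> \<phi>'])
    show "continuous_on {0..1} \<phi>"
      unfolding \<phi>_def by (auto intro!: continuous_intros) (use pos in force)+
    fix t :: real assume t: "0 < t" "t < 1"
    have p: "0 < 1 - t * r" using pos t by simp
    show "(\<phi> has_real_derivative \<phi>' t) (at t)"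
      unfolding \<phi>_def \<phi>'_def using p
      by (auto intro!: derivative_eq_intros simp: field_simps)
    have nw: "cmod (of_real t * z) = t * r" using t by (simp add: norm_mult r_def)
    have wD: "of_real t * z \<in> disc" using nw p by simp
    have e: "1 - t * r \<le> 1 - (cmod (of_real t * z))\<^sup>2"
    proof -
      have "t * r \<le> 1" using p by simp
      then have "(t * r)\<^sup>2 \<le> t * r" using t r0 by (simp add: power2_eq_square mult_left_le_one_le)
      then show ?thesis using nw by simp
    qed
    have "(1 - (cmod (of_real t * z))\<^sup>2) * cmod (deriv f (of_real t * z)) \<le> S"
      using bloch_upper[OF bl wD] disc_weight_pos[OF wD] unfolding S_def by simp
    then have "(1 - t * r) * cmod (deriv f (of_real t * z)) \<le> S"
      using e by (meson mult_right_mono norm_ge_zero order_trans)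
    then have Hb: "cmod (deriv f (of_real t * z)) \<le> S / (1 - t * r)"
      using p by (simp add: field_simps)
    show "cmod z * cmod (deriv f (of_real t * z)) \<le> \<phi>' t"
      unfolding \<phi>'_def r_def[symmetric]
      using mult_left_mono[OF Hb r0] by (simp add: mult_ac)
  qed
  then have I: "cmod (f z - f 0) \<le> S * (- ln (1 - r))" by (simp add: \<phi>_def)
  have L1: "- ln (1 - r) \<le> Lw z" using Lw_ge(2)[OF z] by (simp add: r_def)
  have L2: "ln 2 \<le> Lw z" using Lw_ge(1)[OF z] .
  have l2: "0 < ln (2::real)" "ln (2::real) < 1" using ln2_ge_two_thirds ln_2_less_1 by auto
  have "cmod (f z) \<le> cmod (f 0) + S * Lw z"
    using I mult_left_mono[OF L1 S0] norm_triangle_ineq2[of "f z" "f 0"] by linarith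
  also have "\<dots> \<le> cmod (f 0) * (Lw z / ln 2) + S * (Lw z / ln 2)"
  proof -
    have q: "1 \<le> Lw z / ln 2" using L2 l2 by simp
    then have a: "cmod (f 0) \<le> cmod (f 0) * (Lw z / ln 2)" using mult_left_mono[OF q norm_ge_zero[of "f 0"]] by simp
    have "Lw z * ln 2 \<le> Lw z * 1" using l2 Lw_pos[OF z] by (intro mult_left_mono) auto
    then have "Lw z \<le> Lw z / ln 2" using l2 by (simp add: field_simps)
    then have b: "S * Lw z \<le> S * (Lw z / ln 2)" using S0 by (rule mult_left_mono)
    show ?thesis using a b by linarith
  qed
  also have "\<dots> = bloch_norm 1 f * Lw z / ln 2"
    unfolding bloch_norm_def S_def[symmetric] by (simp add: add_divide_distrib algebra_simps)
  finally show ?thesis .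
qed



definition ell :: "complex \<Rightarrow> complex \<Rightarrow> complex" where
  "ell a z = of_real (ln 2) - Ln (1 - cnj a * z)"

definition tf :: "complex \<Rightarrow> complex \<Rightarrow> complex" where
  "tf a z = (ell a z)\<^sup>2 / of_real (50 * Lw a)"

lemma u_props:
  assumes a: "a \<in> disc" and z: "z \<in> disc"
  shows "0 < Re (1 - cnj a * z)" "cmod (1 - cnj a * z) \<le> 2"
    "1 - cmod a * cmod z \<le> cmod (1 - cnj a * z)" "0 < 1 - cmod a * cmod z"
    "(1 - cnj a * z) \<notin> \<real>\<^sub>\<le>\<^sub>0"
proof -
  have a1: "cmod a < 1" and z1: "cmod z < 1" using a z by auto
  have az: "cmod (cnj a * z) = cmod a * cmod z" by (simp add: norm_mult)
  have az1: "cmod a * cmod z < 1"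
    using a1 z1 by (smt (verit) mult_left_le_one_le mult_nonneg_nonneg norm_ge_zero mult_strict_mono)
  then show "0 < 1 - cmod a * cmod z" by simp
  have "Re (cnj a * z) \<le> cmod (cnj a * z)" by (rule complex_Re_le_cmod)
  then show "0 < Re (1 - cnj a * z)" using az az1 by simp
  then show "(1 - cnj a * z) \<notin> \<real>\<^sub>\<le>\<^sub>0" by (simp add: complex_nonpos_Reals_iff)
  have "cmod (1 - cnj a * z) \<le> 1 + cmod (cnj a * z)" by (metis norm_one norm_triangle_ineq4)
  then show "cmod (1 - cnj a * z) \<le> 2" using az az1 by simp
  have "1 - cmod (cnj a * z) \<le> cmod (1 - cnj a * z)" by (metis norm_one norm_triangle_ineq2)
  then show "1 - cmod a * cmod z \<le> cmod (1 - cnj a * z)" using az by simp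
qed

lemma ell_bound:
  assumes a: "a \<in> disc" and z: "z \<in> disc"
  shows "cmod (ell a z) \<le> 2 * ln 2 + pi - ln (1 - cmod a * cmod z)"
proof -
  define u where "u = 1 - cnj a * z"
  note U = u_props[OF a z, folded u_def]
  have u0: "u \<noteq> 0" using U(5) by auto
  have cu: "0 < cmod u" using u0 by simp
  have "cmod (ell a z) \<le> cmod (of_real (ln 2) :: complex) + cmod (Ln u)"
    unfolding ell_def u_def[symmetric] by (rule norm_triangle_ineq4)
  also have "cmod (of_real (ln 2) :: complex) = ln 2" by simp
  also have "cmod (Ln u) \<le> \<bar>Re (Ln u)\<bar> + \<bar>Im (Ln u)\<bar>" by (rule cmod_le)
  also have "\<bar>Im (Ln u)\<bar> \<le> pi" using mpi_less_Im_Ln[OF u0] Im_Ln_le_pi[OF u0] by auto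
  also have "Re (Ln u) = ln (cmod u)" using Re_Ln[OF u0] .
  also have "\<bar>ln (cmod u)\<bar> \<le> ln 2 - ln (1 - cmod a * cmod z)"
  proof -
    have "ln (cmod u) \<le> ln 2" using U(2) cu by simp
    moreover have "ln (1 - cmod a * cmod z) \<le> ln (cmod u)" using U(3) U(4) cu by (subst ln_le_cancel_iff) auto
    moreover have "ln (1 - cmod a * cmod z) \<le> 0" using U(4) by simp
    moreover have "0 \<le> ln (2::real)" by simp
    ultimately show ?thesis by linarith
  qed
  finally show ?thesis by simp
qed

lemma ell_bound2:
  assumes a: "a \<in> disc" and z: "z \<in> disc"
  shows "cmod (ell a z) \<le> 10 * Lw a"
proof -
  have z1: "cmod z < 1" and a1: "cmod a < 1" using z a by auto
  have "cmod a * cmod z \<le> cmod a" using mult_left_mono[of "cmod z" 1 "cmod a"] z1 by simp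
  then have "- ln (1 - cmod a * cmod z) \<le> - ln (1 - cmod a)" using a1 by simp
  also have "\<dots> \<le> Lw a" by (rule Lw_ge(2)[OF a])
  finally have A: "- ln (1 - cmod a * cmod z) \<le> Lw a" .
  have B: "2 * ln 2 + pi \<le> 9 * Lw a" using Lw_ge(1)[OF a] ln2_ge_two_thirds ln_2_less_1 pi_less_4 by linarith
  show ?thesis using ell_bound[OF a z] A B by linarith
qed

lemma ell_deriv:
  assumes a: "a \<in> disc" and z: "z \<in> disc"
  shows "(ell a has_field_derivative cnj a / (1 - cnj a * z)) (at z)"
proof -
  have d1: "((\<lambda>z. 1 - cnj a * z) has_field_derivative - cnj a) (at z)"
    by (auto intro!: derivative_eq_intros)
  have "((\<lambda>z. Ln (1 - cnj a * z)) has_field_derivative inverse (1 - cnj a * z) * (- cnj a)) (at z)"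
    using DERIV_chain2[OF has_field_derivative_Ln[OF u_props(5)[OF a z]] d1] by simp
  then have "((\<lambda>z. of_real (ln 2) - Ln (1 - cnj a * z)) has_field_derivative 0 - inverse (1 - cnj a * z) * (- cnj a)) (at z)"
    by (intro DERIV_diff) auto
  then show ?thesis unfolding ell_def[abs_def] by (simp add: field_simps)
qed

lemma tf_deriv:
  assumes a: "a \<in> disc" and z: "z \<in> disc"
  shows "(tf a has_field_derivative (2 * ell a z * (cnj a / (1 - cnj a * z))) / of_real (50 * Lw a)) (at z)"
proof -
  have "((\<lambda>z. (ell a z)\<^sup>2) has_field_derivative 2 * ell a z * (cnj a / (1 - cnj a * z))) (at z)"
    using DERIV_power[OF ell_deriv[OF a z], of 2] by (simp add: mult_ac)
  then have "((\<lambda>z. (ell a z)\<^sup>2 / of_real (50 * Lw a)) has_field_derivative (2 * ell a z * (cnj a / (1 - cnj a * z))) / of_real (50 * Lw a)) (at z)"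
    by (rule DERIV_cdivide)
  then show ?thesis unfolding tf_def[abs_def] by simp
qed

lemma tf_holo: "a \<in> disc \<Longrightarrow> tf a holomorphic_on disc"
  unfolding holomorphic_on_open[OF open_ball] using tf_deriv by blast

lemma tf_at: assumes a: "a \<in> disc" shows "tf a a = of_real (Lw a / 50)"
proof -
  have d: "0 < 1 - (cmod a)\<^sup>2" using disc_weight_pos[OF a] .
  have "cnj a * a = of_real ((cmod a)\<^sup>2)" by (metis complex_norm_square mult.commute of_real_power)
  then have "1 - cnj a * a = of_real (1 - (cmod a)\<^sup>2)" by simp
  then have "ell a a = of_real (ln 2 - ln (1 - (cmod a)\<^sup>2))"
    unfolding ell_def using Ln_of_real[OF d] by simp
  also have "ln 2 - ln (1 - (cmod a)\<^sup>2) = Lw a" unfolding Lw_def using d by (simp add: ln_div)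
  finally have "ell a a = of_real (Lw a)" .
  then show ?thesis unfolding tf_def using Lw_pos[OF a] by (simp add: power2_eq_square)
qed

lemma tf_bloch:
  assumes a: "a \<in> disc"
  shows "tf a \<in> bloch 1" "bloch_norm 1 (tf a) \<le> 1"
proof -
  have Lp: "0 < Lw a" using Lw_pos[OF a] .
  have b: "(1 - (cmod z)\<^sup>2) powr 1 * cmod (deriv (tf a) z) \<le> 4 / 5" if z: "z \<in> disc" for z
  proof -
    have z1: "cmod z < 1" using z by simp
    have a1: "cmod a < 1" using a by simp
    note U = u_props[OF a z]
    have dv: "deriv (tf a) z = (2 * ell a z * (cnj a / (1 - cnj a * z))) / of_real (50 * Lw a)"
      using tf_deriv[OF a z] by (rule DERIV_imp_deriv)
    have uz: "1 - cmod z \<le> cmod (1 - cnj a * z)"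
      using U(3) mult_right_mono[of "cmod a" 1 "cmod z"] a1 by simp
    have q: "cmod (cnj a / (1 - cnj a * z)) \<le> 1 / (1 - cmod z)"
    proof -
      have "cmod (cnj a / (1 - cnj a * z)) = cmod a / cmod (1 - cnj a * z)" by (simp add: norm_divide)
      also have "\<dots> \<le> 1 / cmod (1 - cnj a * z)" using a1 U(4) U(3)
        by (intro divide_right_mono) auto
      also have "\<dots> \<le> 1 / (1 - cmod z)"
      proof -
        have up: "0 < cmod (1 - cnj a * z)" using U(3) U(4) by linarith
        have "0 < cmod (1 - cnj a * z) * (1 - cmod z)" using up z1 by (intro mult_pos_pos) auto
        then show ?thesis using uz by (intro divide_left_mono) auto
      qed
      finally show ?thesis .
    qed
    have "cmod (deriv (tf a) z) = 2 * cmod (ell a z) * cmod (cnj a / (1 - cnj a * z)) / (50 * Lw a)"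
      unfolding dv using Lp by (simp add: norm_divide norm_mult)
    also have "\<dots> \<le> 2 * (10 * Lw a) * (1 / (1 - cmod z)) / (50 * Lw a)"
      using ell_bound2[OF a z] q Lp
      by (intro divide_right_mono mult_mono) auto
    also have "\<dots> = (2 / 5) / (1 - cmod z)" using Lp z1 by (simp add: field_simps)
    finally have D: "cmod (deriv (tf a) z) \<le> (2 / 5) / (1 - cmod z)" .
    have "(1 - (cmod z)\<^sup>2) powr 1 * cmod (deriv (tf a) z) = (1 - (cmod z)\<^sup>2) * cmod (deriv (tf a) z)"
      using disc_weight_pos[OF z] by simp
    also have "\<dots> \<le> (1 - (cmod z)\<^sup>2) * ((2 / 5) / (1 - cmod z))"
      using D disc_weight_pos[OF z] by (intro mult_left_mono) auto
    also have "\<dots> = (2 / 5) * (1 + cmod z)"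
      using z1 by (simp add: power2_eq_square field_simps)
    also have "\<dots> \<le> 4 / 5" using z1 by simp
    finally show ?thesis .
  qed
  show bl: "tf a \<in> bloch 1"
    unfolding bloch_def using tf_holo[OF a] b by (auto intro!: bdd_aboveI2[where M="4/5"])
  have t0: "cmod (tf a 0) \<le> 1 / 5"
  proof -
    have "ell a 0 = of_real (ln 2)" by (simp add: ell_def)
    then have "cmod (tf a 0) = (ln 2)\<^sup>2 / (50 * Lw a)" unfolding tf_def using Lp
      by (simp add: norm_divide norm_power)
    also have "\<dots> \<le> 1 / (50 * (2/3))"
    proof (rule frac_le)
      show "(ln (2::real))\<^sup>2 \<le> 1" using ln_2_less_1 ln2_ge_two_thirds
        by (simp add: power_le_one abs_le_iff)
      show "50 * (2 / 3) \<le> 50 * Lw a" using Lw_ge(1)[OF a] ln2_ge_two_thirds by simp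
    qed auto
    finally show ?thesis by simp
  qed
  show "bloch_norm 1 (tf a) \<le> 1"
    unfolding bloch_norm_def using t0 bloch_normI[OF b] by simp
qed

lemma tf_small:
  assumes r0: "0 \<le> \<rho>" and r1: "\<rho> < 1" and a: "a \<in> disc" and w: "cmod w \<le> \<rho>"
  shows "cmod (tf a w) \<le> (2 * ln 2 + pi - ln (1 - \<rho>))\<^sup>2 / (50 * Lw a)"
proof -
  have wD: "w \<in> disc" using w r1 by simp
  have a1: "cmod a < 1" using a by simp
  have "cmod a * cmod w \<le> \<rho>"
    using mult_mono[of "cmod a" 1 "cmod w" \<rho>] a1 w by simp
  then have "- ln (1 - cmod a * cmod w) \<le> - ln (1 - \<rho>)" using r1 by simp
  then have e: "cmod (ell a w) \<le> 2 * ln 2 + pi - ln (1 - \<rho>)" using ell_bound[OF a wD] by linarith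
  have "cmod (tf a w) = (cmod (ell a w))\<^sup>2 / (50 * Lw a)"
    unfolding tf_def using Lw_pos[OF a] by (simp add: norm_divide norm_power)
  also have "\<dots> \<le> (2 * ln 2 + pi - ln (1 - \<rho>))\<^sup>2 / (50 * Lw a)"
    using e Lw_pos[OF a] by (intro divide_right_mono power_mono) auto
  finally show ?thesis .
qed



lemma deriv_cong_disc:
  assumes "\<And>w. w \<in> disc \<Longrightarrow> f w = h w" "z \<in> disc"
  shows "deriv f z = deriv h z"
proof (rule deriv_cong_ev)
  show "\<forall>\<^sub>F x in nhds z. f x = h x"
    using eventually_nhds_in_open[OF open_ball assms(2)] by (rule eventually_mono) (use assms(1) in auto)
qed simp

lemma bloch_norm_cong:
  assumes "\<And>w. w \<in> disc \<Longrightarrow> f w = h w"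
  shows "bloch_norm \<gamma> f = bloch_norm \<gamma> h"
proof -
  have "f 0 = h 0" using assms by simp
  moreover have "(SUP z\<in>disc. (1 - (cmod z)\<^sup>2) powr \<gamma> * cmod (deriv f z)) =
                 (SUP z\<in>disc. (1 - (cmod z)\<^sup>2) powr \<gamma> * cmod (deriv h z))"
    using deriv_cong_disc[OF assms] by (intro SUP_cong) auto
  ultimately show ?thesis by (simp add: bloch_norm_def)
qed

lemma bloch_diff:
  assumes f: "f \<in> bloch \<gamma>" and h: "h \<in> bloch \<gamma>"
  shows "(\<lambda>z. f z - h z) \<in> bloch \<gamma>"
proof -
  have hf: "f holomorphic_on disc" and hh: "h holomorphic_on disc" using f h by (auto simp: bloch_def)
  have "(1 - (cmod z)\<^sup>2) powr \<gamma> * cmod (deriv (\<lambda>z. f z - h z) z) \<le>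
        (SUP z\<in>disc. (1 - (cmod z)\<^sup>2) powr \<gamma> * cmod (deriv f z)) + (SUP z\<in>disc. (1 - (cmod z)\<^sup>2) powr \<gamma> * cmod (deriv h z))"
    if z: "z \<in> disc" for z
  proof -
    have "deriv (\<lambda>z. f z - h z) z = deriv f z - deriv h z"
      by (rule deriv_diff) (use hf hh z in \<open>auto intro: holomorphic_on_imp_differentiable_at\<close>)
    then have "(1 - (cmod z)\<^sup>2) powr \<gamma> * cmod (deriv (\<lambda>z. f z - h z) z) \<le>
       (1 - (cmod z)\<^sup>2) powr \<gamma> * cmod (deriv f z) + (1 - (cmod z)\<^sup>2) powr \<gamma> * cmod (deriv h z)"
      by (simp add: distrib_left[symmetric] mult_left_mono norm_triangle_ineq4)
    then show ?thesis using bloch_upper[OF f z] bloch_upper[OF h z] by linarith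
  qed
  then show ?thesis unfolding bloch_def using hf hh
    by (auto intro!: holomorphic_intros bdd_aboveI2)
qed

lemma bloch_pointwise:
  assumes u: "u \<in> bloch \<gamma>" and g0: "\<gamma> \<ge> 0" and z: "z \<in> disc"
  shows "cmod (u z) \<le> bloch_norm \<gamma> u * (1 + 1 / (1 - (cmod z)\<^sup>2) powr \<gamma>)"
proof -
  define S where "S = (SUP z\<in>disc. (1 - (cmod z)\<^sup>2) powr \<gamma> * cmod (deriv u z))"
  have S0: "S \<ge> 0" unfolding S_def by (rule bloch_sup_nonneg[OF u])
  have hu: "u holomorphic_on disc" using u by (simp add: bloch_def)
  define d where "d = 1 - (cmod z)\<^sup>2"
  have dp: "d > 0" using disc_weight_pos[OF z] by (simp add: d_def)
  define c where "c = 1 / d powr \<gamma>"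
  have c0: "c \<ge> 0" by (simp add: c_def)
  have sub: "cball 0 (cmod z) \<subseteq> disc" using z by auto
  have "cmod (u z - u 0) \<le> (S * c) * cmod (z - 0)"
  proof (rule field_differentiable_bound[where S="cball 0 (cmod z)" and f'="deriv u"])
    fix w :: complex assume w: "w \<in> cball 0 (cmod z)"
    then have wD: "w \<in> disc" using sub by auto
    show "(u has_field_derivative deriv u w) (at w within cball 0 (cmod z))"
      by (rule has_field_derivative_at_within[OF holomorphic_derivI[OF hu open_ball wD]])
    have e: "d \<le> 1 - (cmod w)\<^sup>2" using w by (simp add: d_def power_mono)
    have "d powr \<gamma> \<le> (1 - (cmod w)\<^sup>2) powr \<gamma>" using e dp g0 by (intro powr_mono2) auto
    then have "d powr \<gamma> * cmod (deriv u w) \<le> S"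
      using bloch_upper[OF u wD] unfolding S_def by (meson mult_right_mono norm_ge_zero order_trans)
    then show "cmod (deriv u w) \<le> S * c" using dp by (simp add: c_def field_simps)
  qed (use z in auto)
  also have "\<dots> \<le> S * c"
  proof -
    have "cmod z \<le> 1" using z by simp
    then show ?thesis using mult_left_mono[of "cmod z" 1 "S * c"] S0 c0 by simp
  qed
  finally have "cmod (u z) \<le> cmod (u 0) + S * c" using norm_triangle_ineq2[of "u z" "u 0"] by linarith
  also have "\<dots> \<le> (cmod (u 0) + S) * (1 + c)" using c0 S0 by (simp add: algebra_simps)
  finally show ?thesis by (simp add: bloch_norm_def S_def c_def d_def)
qed

lemma iter_sup:
  assumes r1: "\<rho> < 1" and holo: "H holomorphic_on disc"
    and hb: "\<And>w. cmod w \<le> \<rho> \<Longrightarrow> cmod (H w) \<le> B"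
  shows "cmod w \<le> \<rho> \<Longrightarrow> cmod ((intop ^^ k) H w) \<le> B"
proof (induction k arbitrary: w)
  case 0 then show ?case using hb by simp
next
  case (Suc k)
  have B0: "0 \<le> B" using hb[of 0] Suc.prems by (smt (verit) norm_ge_zero norm_zero)
  have sub: "cball 0 \<rho> \<subseteq> disc" using r1 by auto
  have r0: "0 \<le> \<rho>" using Suc.prems norm_ge_zero order_trans by blast
  have "cmod (intop ((intop ^^ k) H) w - intop ((intop ^^ k) H) 0) \<le> B * cmod (w - 0)"
  proof (rule field_differentiable_bound[where S="cball 0 \<rho>" and f'="(intop ^^ k) H"])
    fix v :: complex assume v: "v \<in> cball 0 \<rho>"
    then have vD: "v \<in> disc" using sub by auto
    show "(intop ((intop ^^ k) H) has_field_derivative (intop ^^ k) H v) (at v within cball 0 \<rho>)"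
      by (rule has_field_derivative_at_within[OF intop_has_deriv[OF iter_holo[OF holo] vD]])
    show "cmod ((intop ^^ k) H v) \<le> B" using Suc.IH v by simp
  qed (use Suc.prems r0 in auto)
  also have "\<dots> \<le> B"
  proof -
    have "cmod w \<le> 1" using Suc.prems r1 by simp
    then show ?thesis using mult_left_mono[of "cmod w" 1 B] B0 by simp
  qed
  finally show ?case by simp
qed



lemma part1_suff:
  assumes b: "\<beta> > 0" and n: "n > 0" and holo: "g holomorphic_on disc"
    and bd: "bdd_above ((\<lambda>z. (1 - (cmod z)\<^sup>2) powr (real n + \<beta> - 1)
                          * ln (2 / (1 - (cmod z)\<^sup>2)) * cmod (g z)) ` disc)"
  shows "bounded_bloch_op 1 \<beta> (\<lambda>f. (intop ^^ n) (\<lambda>z. f z * g z))"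
proof -
  obtain B where B: "\<And>z. z \<in> disc \<Longrightarrow> (1 - (cmod z)\<^sup>2) powr (real n + \<beta> - 1) * Lw z * cmod (g z) \<le> B"
  proof -
    from bd obtain B0 where "\<forall>x\<in>(\<lambda>z. (1 - (cmod z)\<^sup>2) powr (real n + \<beta> - 1)
                          * ln (2 / (1 - (cmod z)\<^sup>2)) * cmod (g z)) ` disc. x \<le> B0"
      unfolding bdd_above_def by blast
    then show ?thesis using that unfolding Lw_def by blast
  qed
  obtain C where C: "C > 0" and HC: "\<And>H M. H holomorphic_on disc \<Longrightarrow>
     (\<forall>w\<in>disc. (1 - (cmod w)\<^sup>2) powr (real n + \<beta> - 1) * cmod (H w) \<le> M) \<Longrightarrow>
     (intop ^^ n) H \<in> bloch \<beta> \<and> bloch_norm \<beta> ((intop ^^ n) H) \<le> C * M"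
    using suff[OF b n] by blast
  have l2: "0 < ln (2::real)" by simp
  have main: "(intop ^^ n) (\<lambda>z. f z * g z) \<in> bloch \<beta> \<and>
      bloch_norm \<beta> ((intop ^^ n) (\<lambda>z. f z * g z)) \<le> C * (bloch_norm 1 f * B / ln 2)"
    if f: "f \<in> bloch 1" for f
  proof (rule HC)
    show "(\<lambda>z. f z * g z) holomorphic_on disc" using f holo by (auto simp: bloch_def intro!: holomorphic_intros)
    show "\<forall>w\<in>disc. (1 - (cmod w)\<^sup>2) powr (real n + \<beta> - 1) * cmod (f w * g w) \<le> bloch_norm 1 f * B / ln 2"
    proof
      fix w assume w: "w \<in> disc"
      define q where "q = (1 - (cmod w)\<^sup>2) powr (real n + \<beta> - 1)"
      have q0: "q \<ge> 0" by (simp add: q_def)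
      have N0: "bloch_norm 1 f \<ge> 0" by (rule bloch_norm_nonneg[OF f])
      have "q * cmod (f w * g w) = q * cmod (f w) * cmod (g w)" by (simp add: norm_mult)
      also have "\<dots> \<le> q * (bloch_norm 1 f * Lw w / ln 2) * cmod (g w)"
        using bloch_growth[OF f w] q0 by (intro mult_right_mono mult_left_mono) auto
      also have "\<dots> = (bloch_norm 1 f / ln 2) * (q * Lw w * cmod (g w))" by simp
      also have "\<dots> \<le> (bloch_norm 1 f / ln 2) * B"
        using B[OF w] N0 l2 unfolding q_def by (intro mult_left_mono) auto
      finally show "q * cmod (f w * g w) \<le> bloch_norm 1 f * B / ln 2" by simp
    qed
  qed
  show ?thesis unfolding bounded_bloch_op_def
  proof (intro conjI ballI exI[of _ "C * B / ln 2"])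
    fix f assume f: "f \<in> bloch 1"
    show "(intop ^^ n) (\<lambda>z. f z * g z) \<in> bloch \<beta>" using main[OF f] by blast
    show "bloch_norm \<beta> ((intop ^^ n) (\<lambda>z. f z * g z)) \<le> C * B / ln 2 * bloch_norm 1 f"
      using main[OF f] by (simp add: mult_ac)
  qed
qed

lemma part1_nec:
  assumes b: "\<beta> > 0" and n: "n > 0" and holo: "g holomorphic_on disc"
    and bo: "bounded_bloch_op 1 \<beta> (\<lambda>f. (intop ^^ n) (\<lambda>z. f z * g z))"
  shows "bdd_above ((\<lambda>z. (1 - (cmod z)\<^sup>2) powr (real n + \<beta> - 1)
                          * ln (2 / (1 - (cmod z)\<^sup>2)) * cmod (g z)) ` disc)"
proof -
  obtain C0 where in_b: "\<And>f. f \<in> bloch 1 \<Longrightarrow> (intop ^^ n) (\<lambda>z. f z * g z) \<in> bloch \<beta>"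
    and C0: "\<And>f. f \<in> bloch 1 \<Longrightarrow> bloch_norm \<beta> ((intop ^^ n) (\<lambda>z. f z * g z)) \<le> C0 * bloch_norm 1 f"
    using bo unfolding bounded_bloch_op_def by blast
  obtain C1 where C1: "C1 > 0" and HC: "\<And>H. H holomorphic_on disc \<Longrightarrow> (intop ^^ n) H \<in> bloch \<beta> \<Longrightarrow>
     (\<forall>z\<in>disc. (1 - (cmod z)\<^sup>2) powr (real n + \<beta> - 1) * cmod (H z) \<le> C1 * bloch_norm \<beta> ((intop ^^ n) H))"
    using nec[OF b n] by blast
  have "(1 - (cmod a)\<^sup>2) powr (real n + \<beta> - 1) * ln (2 / (1 - (cmod a)\<^sup>2)) * cmod (g a) \<le> 50 * (C1 * max C0 0)"
    if a: "a \<in> disc" for a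
  proof -
    have tb: "tf a \<in> bloch 1" "bloch_norm 1 (tf a) \<le> 1" using tf_bloch[OF a] by auto
    have hol: "(\<lambda>z. tf a z * g z) holomorphic_on disc" using tf_holo[OF a] holo by (auto intro!: holomorphic_intros)
    have "(1 - (cmod a)\<^sup>2) powr (real n + \<beta> - 1) * cmod (tf a a * g a) \<le> C1 * bloch_norm \<beta> ((intop ^^ n) (\<lambda>z. tf a z * g z))"
      using HC[OF hol in_b[OF tb(1)]] a by blast
    also have "\<dots> \<le> C1 * (max C0 0)"
    proof -
      have N0: "0 \<le> bloch_norm 1 (tf a)" by (rule bloch_norm_nonneg[OF tb(1)])
      have "C0 * bloch_norm 1 (tf a) \<le> max C0 0 * bloch_norm 1 (tf a)" using N0 by (intro mult_right_mono) auto
      also have "\<dots> \<le> max C0 0 * 1" using tb(2) by (intro mult_left_mono) auto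
      finally show ?thesis using C0[OF tb(1)] C1 by (intro mult_left_mono) auto
    qed
    finally have *: "(1 - (cmod a)\<^sup>2) powr (real n + \<beta> - 1) * cmod (tf a a * g a) \<le> C1 * max C0 0" .
    have "cmod (tf a a * g a) = Lw a / 50 * cmod (g a)" unfolding norm_mult tf_at[OF a] using Lw_pos[OF a] by simp
    then have e: "(1 - (cmod a)\<^sup>2) powr (real n + \<beta> - 1) * Lw a * cmod (g a) =
        50 * ((1 - (cmod a)\<^sup>2) powr (real n + \<beta> - 1) * cmod (tf a a * g a))" by simp
    show ?thesis using e * unfolding Lw_def by linarith
  qed
  then show ?thesis by (intro bdd_aboveI2) 
qed

lemma Lw_mono: assumes "z \<in> disc" "cmod w \<le> cmod z" shows "Lw w \<le> Lw z"
proof -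
  have wD: "w \<in> disc" using assms by simp
  have "(cmod w)\<^sup>2 \<le> (cmod z)\<^sup>2" using assms(2) by (simp add: power_mono)
  then have "2 / (1 - (cmod w)\<^sup>2) \<le> 2 / (1 - (cmod z)\<^sup>2)"
    using disc_weight_pos[OF wD] disc_weight_pos[OF assms(1)] by (intro divide_left_mono) auto
  then show ?thesis unfolding Lw_def
    using disc_weight_pos[OF wD] disc_weight_pos[OF assms(1)] by (subst ln_le_cancel_iff) auto
qed

lemma W_cont:
  assumes holo: "g holomorphic_on disc" and r1: "\<rho> < 1"
  shows "continuous_on (cball 0 \<rho>) (\<lambda>z. (1 - (cmod z)\<^sup>2) powr e * ln (2 / (1 - (cmod z)\<^sup>2)) * cmod (g z))"
proof -
  have sub: "cball 0 \<rho> \<subseteq> disc" using r1 by auto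
  have pos: "0 < 1 - (cmod z)\<^sup>2" if "z \<in> cball 0 \<rho>" for z using disc_weight_pos sub that by auto
  have pos2: "(cmod z)\<^sup>2 \<noteq> 1" if "cmod z \<le> \<rho>" for z using pos[of z] that by auto
  have gc: "continuous_on (cball 0 \<rho>) g"
    using holomorphic_on_imp_continuous_on[OF holo] sub continuous_on_subset by blast
  show ?thesis
    by (intro continuous_intros gc) (use pos pos2 in \<open>auto simp: field_simps\<close>)
qed

lemma littleo_bdd:
  assumes holo: "g holomorphic_on disc"
    and lo: "\<forall>\<epsilon>>0. \<exists>r<1. \<forall>z. r < cmod z \<and> cmod z < 1 \<longrightarrow>
               (1 - (cmod z)\<^sup>2) powr e * ln (2 / (1 - (cmod z)\<^sup>2)) * cmod (g z) < \<epsilon>"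
  shows "bdd_above ((\<lambda>z. (1 - (cmod z)\<^sup>2) powr e * ln (2 / (1 - (cmod z)\<^sup>2)) * cmod (g z)) ` disc)"
proof -
  let ?W = "\<lambda>z. (1 - (cmod z)\<^sup>2) powr e * ln (2 / (1 - (cmod z)\<^sup>2)) * cmod (g z)"
  obtain r where r1: "r < 1" and rW: "\<And>z. r < cmod z \<Longrightarrow> cmod z < 1 \<Longrightarrow> ?W z < 1"
    using lo[rule_format, of 1] by auto
  define \<rho> where "\<rho> = max r 0"
  have p1: "\<rho> < 1" using r1 by (simp add: \<rho>_def)
  have "compact (?W ` cball 0 \<rho>)"
    by (rule compact_continuous_image[OF W_cont[OF holo p1] compact_cball])
  then have "bdd_above (?W ` cball 0 \<rho>)" by (intro bounded_imp_bdd_above compact_imp_bounded)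
  then obtain M where M: "\<And>z. z \<in> cball 0 \<rho> \<Longrightarrow> ?W z \<le> M" unfolding bdd_above_def by blast
  show ?thesis
  proof (rule bdd_aboveI2[where M="max M 1"])
    fix z :: complex assume z: "z \<in> disc"
    show "?W z \<le> max M 1"
    proof (cases "cmod z \<le> \<rho>")
      case True then show ?thesis using M[of z] by auto
    next
      case False
      then have "r < cmod z" by (simp add: \<rho>_def)
      then have "?W z < 1" using rW z by simp
      then show ?thesis by simp
    qed
  qed
qed



lemma part2_nec:
  assumes b: "\<beta> > 0" and n: "n > 0" and holo: "g holomorphic_on disc"
    and comp: "compact_bloch_op 1 \<beta> (\<lambda>f. (intop ^^ n) (\<lambda>z. f z * g z))"
  shows "\<forall>\<epsilon>>0. \<exists>r<1. \<forall>z. r < cmod z \<and> cmod z < 1 \<longrightarrow>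
               (1 - (cmod z)\<^sup>2) powr (real n + \<beta> - 1)
                 * ln (2 / (1 - (cmod z)\<^sup>2)) * cmod (g z) < \<epsilon>"
proof (rule ccontr)
  let ?W = "\<lambda>z. (1 - (cmod z)\<^sup>2) powr (real n + \<beta> - 1) * ln (2 / (1 - (cmod z)\<^sup>2)) * cmod (g z)"
  let ?T = "\<lambda>f. (intop ^^ n) (\<lambda>z. f z * g z)"
  assume "\<not> (\<forall>\<epsilon>>0. \<exists>r<1. \<forall>z. r < cmod z \<and> cmod z < 1 \<longrightarrow> ?W z < \<epsilon>)"
  then obtain \<epsilon> where ep: "\<epsilon> > 0" and he0: "\<forall>r<1. \<exists>z. r < cmod z \<and> cmod z < 1 \<and> \<not> ?W z < \<epsilon>"
    by blast
  have he: "\<exists>z. r < cmod z \<and> cmod z < 1 \<and> \<epsilon> \<le> ?W z" if "r < 1" for r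
    using he0 that not_less by blast
  have "\<forall>k. \<exists>z. 1 - exp (- (real k + 1)) < cmod z \<and> cmod z < 1 \<and> \<epsilon> \<le> ?W z"
  proof
    fix k :: nat
    have "1 - exp (- (real k + 1)) < 1" by simp
    then show "\<exists>z. 1 - exp (- (real k + 1)) < cmod z \<and> cmod z < 1 \<and> \<epsilon> \<le> ?W z" by (rule he)
  qed
  then obtain a where a: "\<And>k. 1 - exp (- (real k + 1)) < cmod (a k) \<and> cmod (a k) < 1 \<and> \<epsilon> \<le> ?W (a k)"
    by metis
  have aD: "a k \<in> disc" for k using a[of k] by simp
  have La: "real k + 1 \<le> Lw (a k)" for k
  proof -
    have p: "0 < 1 - cmod (a k)" using a[of k] by simp
    have "1 - cmod (a k) < exp (- (real k + 1))" using a[of k] by simp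
    then have "ln (1 - cmod (a k)) < - (real k + 1)" using p ln_less_cancel_iff[of "1 - cmod (a k)" "exp (- (real k + 1))"] by simp
    then show ?thesis using Lw_ge(2)[OF aD[of k]] by linarith
  qed
  define F where "F k = tf (a k)" for k
  have Fb: "F k \<in> bloch 1" "bloch_norm 1 (F k) \<le> 1" for k using tf_bloch[OF aD[of k]] by (auto simp: F_def)
  have inb: "\<And>f. f \<in> bloch 1 \<Longrightarrow> ?T f \<in> bloch \<beta>" using comp unfolding compact_bloch_op_def by blast
  obtain r h where r: "strict_mono r" and hb: "h \<in> bloch \<beta>"
    and lim: "(\<lambda>k. bloch_norm \<beta> (\<lambda>z. ?T (F (r k)) z - h z)) \<longlonglongrightarrow> 0"
    using comp Fb unfolding compact_bloch_op_def by blast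
  define u where "u k = (\<lambda>z. ?T (F (r k)) z - h z)" for k
  have ub: "u k \<in> bloch \<beta>" for k unfolding u_def by (rule bloch_diff[OF inb[OF Fb(1)] hb])
  have Fholo: "(\<lambda>z. F k z * g z) holomorphic_on disc" for k
    using tf_holo[OF aD[of k]] holo by (auto simp: F_def intro!: holomorphic_intros)
  have h0: "h z = 0" if z: "z \<in> disc" for z
  proof -
    have l1: "(\<lambda>k. u k z) \<longlonglongrightarrow> 0"
    proof (rule Lim_null_comparison)
      show "\<forall>\<^sub>F k in sequentially. norm (u k z) \<le> bloch_norm \<beta> (u k) * (1 + 1 / (1 - (cmod z)\<^sup>2) powr \<beta>)"
        using bloch_pointwise[OF ub _ z] b by simp
      show "(\<lambda>k. bloch_norm \<beta> (u k) * (1 + 1 / (1 - (cmod z)\<^sup>2) powr \<beta>)) \<longlonglongrightarrow> 0"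
        using tendsto_mult_left_zero[OF lim[folded u_def]] by simp
    qed
    define \<rho> where "\<rho> = cmod z"
    have r1: "\<rho> < 1" and r0: "0 \<le> \<rho>" using z by (auto simp: \<rho>_def)
    define K0 where "K0 = (2 * ln 2 + pi - ln (1 - \<rho>))\<^sup>2"
    have K00: "K0 \<ge> 0" by (simp add: K0_def)
    have "compact (g ` cball 0 \<rho>)"
      by (rule compact_continuous_image[OF continuous_on_subset[OF holomorphic_on_imp_continuous_on[OF holo]] compact_cball])
         (use r1 in auto)
    then have "bounded (g ` cball 0 \<rho>)" by (rule compact_imp_bounded)
    then obtain G where G0: "\<forall>x\<in>g ` cball 0 \<rho>. norm x \<le> G" unfolding bounded_iff by blast
    then have G: "\<And>w. w \<in> cball 0 \<rho> \<Longrightarrow> cmod (g w) \<le> G" by blast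
    have "cmod (g 0) \<le> G" using G r0 by simp
    then have G0: "0 \<le> G" by (meson norm_ge_zero order_trans)
    have l2: "(\<lambda>k. ?T (F (r k)) z) \<longlonglongrightarrow> 0"
    proof (rule Lim_null_comparison)
      show "\<forall>\<^sub>F k in sequentially. norm (?T (F (r k)) z) \<le> K0 * G / 50 * inverse (real (Suc k))"
      proof (rule always_eventually, rule allI)
        fix k
        have Lk: "real k + 1 \<le> Lw (a (r k))"
          using La[of "r k"] seq_suble[OF r, of k] by linarith
        have Lp: "0 < Lw (a (r k))" using Lw_pos[OF aD] by blast
        have "cmod (F (r k) w * g w) \<le> K0 * G / 50 * inverse (real (Suc k))" if w: "cmod w \<le> \<rho>" for w
        proof -
          have t: "cmod (F (r k) w) \<le> K0 / (50 * Lw (a (r k)))"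
            unfolding F_def K0_def by (rule tf_small[OF r0 r1 aD w])
          also have "\<dots> \<le> K0 / (50 * (real k + 1))"
            using Lk K00 by (intro divide_left_mono) auto
          finally have t': "cmod (F (r k) w) \<le> K0 / (50 * (real k + 1))" .
          have "cmod (F (r k) w * g w) \<le> K0 / (50 * (real k + 1)) * G"
            unfolding norm_mult using t' G[of w] w K00 by (intro mult_mono) auto
          then show ?thesis by (simp add: field_simps)
        qed
        then show "norm (?T (F (r k)) z) \<le> K0 * G / 50 * inverse (real (Suc k))"
          using iter_sup[OF r1 Fholo[of "r k"], of "K0 * G / 50 * inverse (real (Suc k))" z n]
          by (simp add: \<rho>_def)
      qed
      show "(\<lambda>k. K0 * G / 50 * inverse (real (Suc k))) \<longlonglongrightarrow> 0"
        using tendsto_mult_right_zero[OF LIMSEQ_inverse_real_of_nat] by simp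
    qed
    have "(\<lambda>k. ?T (F (r k)) z - u k z) \<longlonglongrightarrow> 0 - 0" by (rule tendsto_diff[OF l2 l1])
    moreover have "?T (F (r k)) z - u k z = h z" for k by (simp add: u_def)
    ultimately have "(\<lambda>k. h z) \<longlonglongrightarrow> 0" by simp
    then show ?thesis by (simp add: LIMSEQ_const_iff)
  qed
  obtain C1 where C1: "C1 > 0" and HC: "\<And>H. H holomorphic_on disc \<Longrightarrow> (intop ^^ n) H \<in> bloch \<beta> \<Longrightarrow>
     (\<forall>z\<in>disc. (1 - (cmod z)\<^sup>2) powr (real n + \<beta> - 1) * cmod (H z) \<le> C1 * bloch_norm \<beta> ((intop ^^ n) H))"
    using nec[OF b n] by blast
  have lower: "\<epsilon> / (50 * C1) \<le> bloch_norm \<beta> (u k)" for k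
  proof -
    define a' where "a' = a (r k)"
    have a'D: "a' \<in> disc" using aD by (simp add: a'_def)
    have eqn: "bloch_norm \<beta> (u k) = bloch_norm \<beta> (?T (F (r k)))"
      unfolding u_def by (rule bloch_norm_cong) (simp add: h0)
    define q where "q = (1 - (cmod a')\<^sup>2) powr (real n + \<beta> - 1)"
    define X where "X = C1 * bloch_norm \<beta> (?T (F (r k)))"
    have A: "q * cmod (F (r k) a' * g a') \<le> X"
      using HC[OF Fholo inb[OF Fb(1)]] a'D unfolding q_def X_def by blast
    have B: "cmod (F (r k) a' * g a') = Lw a' / 50 * cmod (g a')"
      unfolding norm_mult F_def a'_def[symmetric] tf_at[OF a'D] using Lw_pos[OF a'D] by simp
    have Wd: "\<epsilon> \<le> q * Lw a' * cmod (g a')" using a[of "r k"] by (simp add: a'_def q_def Lw_def)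
    have "q * Lw a' * cmod (g a') = 50 * (q * cmod (F (r k) a' * g a'))" using B by simp
    then have "\<epsilon> / 50 \<le> X" using A Wd by linarith
    then have "\<epsilon> / 50 \<le> C1 * bloch_norm \<beta> (u k)" unfolding eqn X_def .
    then show ?thesis using C1 by (simp add: field_simps)
  qed
  have "\<forall>\<^sub>F k in sequentially. bloch_norm \<beta> (u k) < \<epsilon> / (50 * C1)"
    using order_tendstoD(2)[OF lim[folded u_def]] ep C1 by simp
  then obtain k where "bloch_norm \<beta> (u k) < \<epsilon> / (50 * C1)" using eventually_sequentially by auto
  with lower[of k] show False by simp
qed



lemma part2_suff:
  assumes b: "\<beta> > 0" and n: "n > 0" and holo: "g holomorphic_on disc"
    and lo: "\<forall>\<epsilon>>0. \<exists>r<1. \<forall>z. r < cmod z \<and> cmod z < 1 \<longrightarrow>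
               (1 - (cmod z)\<^sup>2) powr (real n + \<beta> - 1)
                 * ln (2 / (1 - (cmod z)\<^sup>2)) * cmod (g z) < \<epsilon>"
  shows "compact_bloch_op 1 \<beta> (\<lambda>f. (intop ^^ n) (\<lambda>z. f z * g z))"
proof -
  let ?e = "real n + \<beta> - 1"
  let ?T = "\<lambda>f. (intop ^^ n) (\<lambda>z. f z * g z)"
  have e0: "?e \<ge> 0" using n b by (simp add: Suc_le_eq)
  have bd: "bdd_above ((\<lambda>z. (1 - (cmod z)\<^sup>2) powr ?e * ln (2 / (1 - (cmod z)\<^sup>2)) * cmod (g z)) ` disc)"
    by (rule littleo_bdd[OF holo lo])
  have inb: "\<And>f. f \<in> bloch 1 \<Longrightarrow> ?T f \<in> bloch \<beta>"
    using part1_suff[OF b n holo bd] unfolding bounded_bloch_op_def by blast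
  obtain B where B: "\<And>z. z \<in> disc \<Longrightarrow> (1 - (cmod z)\<^sup>2) powr ?e * Lw z * cmod (g z) \<le> B"
  proof -
    from bd obtain B0 where "\<forall>x\<in>(\<lambda>z. (1 - (cmod z)\<^sup>2) powr ?e
                          * ln (2 / (1 - (cmod z)\<^sup>2)) * cmod (g z)) ` disc. x \<le> B0"
      unfolding bdd_above_def by blast
    then show ?thesis using that unfolding Lw_def by blast
  qed
  obtain C where C: "C > 0" and HC: "\<And>H M. H holomorphic_on disc \<Longrightarrow>
     (\<forall>w\<in>disc. (1 - (cmod w)\<^sup>2) powr ?e * cmod (H w) \<le> M) \<Longrightarrow>
     (intop ^^ n) H \<in> bloch \<beta> \<and> bloch_norm \<beta> ((intop ^^ n) H) \<le> C * M"
    using suff[OF b n] by blast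
  have l2: "0 < ln (2::real)" by simp
  show ?thesis unfolding compact_bloch_op_def
  proof (intro conjI allI impI ballI)
    fix f assume "f \<in> bloch 1" then show "?T f \<in> bloch \<beta>" by (rule inb)
  next
    fix F :: "nat \<Rightarrow> complex \<Rightarrow> complex"
    assume hF: "\<forall>k. F k \<in> bloch 1 \<and> bloch_norm 1 (F k) \<le> 1"
    have grow: "cmod (F k z) \<le> Lw z / ln 2" if z: "z \<in> disc" for k z
    proof -
      have "cmod (F k z) \<le> bloch_norm 1 (F k) * Lw z / ln 2" using bloch_growth[OF _ z] hF by blast
      also have "\<dots> \<le> 1 * Lw z / ln 2"
        using hF Lw_pos[OF z] l2 by (intro divide_right_mono mult_right_mono) auto
      finally show ?thesis by simp
    qed
    define \<H> where "\<H> = {f. f holomorphic_on disc \<and> (\<forall>z\<in>disc. cmod (f z) \<le> Lw z / ln 2)}"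
    have bnd: "\<exists>B. \<forall>h\<in>\<H>. \<forall>z\<in>K. cmod (h z) \<le> B" if K: "compact K" "K \<subseteq> disc" for K
    proof (cases "K = {}")
      case True then show ?thesis by auto
    next
      case False
      obtain z0 where z0: "z0 \<in> K" "\<And>y. y \<in> K \<Longrightarrow> norm y \<le> norm z0"
        using continuous_attains_sup[OF K(1) False continuous_on_norm_id] by blast
      have z0D: "z0 \<in> disc" using z0 K by auto
      show ?thesis
      proof (intro exI ballI)
        fix h z assume h: "h \<in> \<H>" and z: "z \<in> K"
        have zD: "z \<in> disc" using z K by auto
        have "cmod (h z) \<le> Lw z / ln 2" using h zD by (auto simp: \<H>_def)
        also have "\<dots> \<le> Lw z0 / ln 2" using Lw_mono[OF z0D z0(2)[OF z]] l2 by (intro divide_right_mono) auto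
        finally show "cmod (h z) \<le> Lw z0 / ln 2" .
      qed
    qed
    have Hh: "\<And>h. h \<in> \<H> \<Longrightarrow> h holomorphic_on disc" by (auto simp: \<H>_def)
    have rng: "range F \<subseteq> \<H>" using hF grow by (auto simp: \<H>_def bloch_def)
    obtain Fl r where Flh: "Fl holomorphic_on disc" and r: "strict_mono (r :: nat \<Rightarrow> nat)"
      and lim: "\<And>x. x \<in> disc \<Longrightarrow> ((\<lambda>k. F (r k) x) \<longlongrightarrow> Fl x) sequentially"
      and unif: "\<And>K. compact K \<Longrightarrow> K \<subseteq> disc \<Longrightarrow> uniform_limit K (F \<circ> r) Fl sequentially"
      using Montel[OF open_ball Hh bnd rng] by blast
    have Flb: "cmod (Fl z) \<le> Lw z / ln 2" if z: "z \<in> disc" for z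
      by (rule Lim_norm_ubound[OF trivial_limit_sequentially lim[OF z]]) (use grow z in auto)
    have Flg_holo: "(\<lambda>z. Fl z * g z) holomorphic_on disc" using Flh holo by (auto intro!: holomorphic_intros)
    have Flg_b: "\<forall>w\<in>disc. (1 - (cmod w)\<^sup>2) powr ?e * cmod (Fl w * g w) \<le> B / ln 2"
    proof
      fix w assume w: "w \<in> disc"
      define q where "q = (1 - (cmod w)\<^sup>2) powr ?e"
      have q0: "q \<ge> 0" by (simp add: q_def)
      have "q * cmod (Fl w * g w) = q * cmod (Fl w) * cmod (g w)" by (simp add: norm_mult)
      also have "\<dots> \<le> q * (Lw w / ln 2) * cmod (g w)"
        using Flb[OF w] q0 by (intro mult_right_mono mult_left_mono) auto
      also have "\<dots> = (q * Lw w * cmod (g w)) / ln 2" by simp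
      also have "\<dots> \<le> B / ln 2" using B[OF w] l2 unfolding q_def by (intro divide_right_mono) auto
      finally show "q * cmod (Fl w * g w) \<le> B / ln 2" .
    qed
    define h where "h = (intop ^^ n) (\<lambda>z. Fl z * g z)"
    have hb: "h \<in> bloch \<beta>" using HC[OF Flg_holo Flg_b] by (simp add: h_def)
    define Hk where "Hk k = (\<lambda>z. F (r k) z * g z - Fl z * g z)" for k
    have Fkh: "(\<lambda>z. F (r k) z * g z) holomorphic_on disc" for k
      using hF holo by (auto simp: bloch_def intro!: holomorphic_intros)
    have Hk_holo: "Hk k holomorphic_on disc" for k
      unfolding Hk_def using holomorphic_on_diff[OF Fkh Flg_holo] .
    have eqk: "?T (F (r k)) w - h w = (intop ^^ n) (Hk k) w" if "w \<in> disc" for k w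
      unfolding Hk_def h_def using iter_diff[OF Fkh Flg_holo that] by simp
    have small: "\<forall>\<^sub>F k in sequentially. \<forall>w\<in>disc. (1 - (cmod w)\<^sup>2) powr ?e * cmod (Hk k w) \<le> \<epsilon>"
      if ep: "\<epsilon> > 0" for \<epsilon>
    proof -
      have ep': "\<epsilon> * ln 2 / 2 > 0" using ep l2 by simp
      obtain r0 where r01: "r0 < 1" and rW: "\<And>z. r0 < cmod z \<Longrightarrow> cmod z < 1 \<Longrightarrow>
          (1 - (cmod z)\<^sup>2) powr ?e * ln (2 / (1 - (cmod z)\<^sup>2)) * cmod (g z) < \<epsilon> * ln 2 / 2"
        using lo[rule_format, OF ep'] by blast
      define \<rho> where "\<rho> = max r0 0"
      have p1: "\<rho> < 1" and p0: "0 \<le> \<rho>" using r01 by (auto simp: \<rho>_def)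
      have Ksub: "cball 0 \<rho> \<subseteq> disc" using p1 by auto
      have "compact (g ` cball 0 \<rho>)"
        by (rule compact_continuous_image[OF continuous_on_subset[OF holomorphic_on_imp_continuous_on[OF holo] Ksub] compact_cball])
      then have "bounded (g ` cball 0 \<rho>)" by (rule compact_imp_bounded)
      then obtain G where "\<forall>x\<in>g ` cball 0 \<rho>. norm x \<le> G" unfolding bounded_iff by blast
      then have G: "\<And>w. w \<in> cball 0 \<rho> \<Longrightarrow> cmod (g w) \<le> G" by blast
      have "cmod (g 0) \<le> G" using G p0 by simp
      then have G0: "0 \<le> G" by (meson norm_ge_zero order_trans)
      have d: "\<epsilon> / (G + 1) > 0" using ep G0 by simp
      have ev: "\<forall>\<^sub>F k in sequentially. \<forall>x\<in>cball 0 \<rho>. dist ((F \<circ> r) k x) (Fl x) < \<epsilon> / (G + 1)"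
        using unif[OF compact_cball Ksub] d unfolding uniform_limit_iff by blast
      show ?thesis
      proof (rule eventually_mono[OF ev], intro ballI)
        fix k w
        assume hk: "\<forall>x\<in>cball 0 \<rho>. dist ((F \<circ> r) k x) (Fl x) < \<epsilon> / (G + 1)" and w: "w \<in> disc"
        define q where "q = (1 - (cmod w)\<^sup>2) powr ?e"
        have q0: "q \<ge> 0" by (simp add: q_def)
        have Hn: "cmod (Hk k w) = cmod (F (r k) w - Fl w) * cmod (g w)"
          unfolding Hk_def by (simp add: left_diff_distrib[symmetric] norm_mult)
        show "q * cmod (Hk k w) \<le> \<epsilon>"
        proof (cases "cmod w \<le> \<rho>")
          case True
          have q1: "q \<le> 1" unfolding q_def using e0 disc_weight_pos[OF w] by (intro powr_le1) auto
          have dd: "cmod (F (r k) w - Fl w) \<le> \<epsilon> / (G + 1)"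
          proof -
            have "w \<in> cball 0 \<rho>" using True by simp
            then have "dist ((F \<circ> r) k w) (Fl w) < \<epsilon> / (G + 1)" using hk by blast
            then show ?thesis by (simp add: dist_norm)
          qed
          have "cmod (Hk k w) \<le> \<epsilon> / (G + 1) * G"
            unfolding Hn using dd G[of w] True d by (intro mult_mono) auto
          also have "\<dots> \<le> \<epsilon>" using ep G0 by (simp add: field_simps)
          finally have hk1: "cmod (Hk k w) \<le> \<epsilon>" .
          have "q * cmod (Hk k w) \<le> 1 * cmod (Hk k w)" using q1 by (intro mult_right_mono) auto
          then show ?thesis using hk1 by simp
        next
          case False
          then have rz: "r0 < cmod w" by (simp add: \<rho>_def)
          have wl: "cmod w < 1" using w by simp
          have "cmod (F (r k) w - Fl w) \<le> cmod (F (r k) w) + cmod (Fl w)" by (rule norm_triangle_ineq4)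
          also have "\<dots> \<le> 2 * (Lw w / ln 2)" using grow[OF w, of "r k"] Flb[OF w] by linarith
          finally have s: "cmod (F (r k) w - Fl w) \<le> 2 * (Lw w / ln 2)" .
          have "q * cmod (Hk k w) \<le> q * (2 * (Lw w / ln 2) * cmod (g w))"
            unfolding Hn using s q0 by (intro mult_left_mono mult_right_mono) auto
          also have "\<dots> = (2 / ln 2) * (q * Lw w * cmod (g w))" by (simp add: field_simps)
          also have "\<dots> \<le> (2 / ln 2) * (\<epsilon> * ln 2 / 2)"
            using rW[OF rz wl] l2 unfolding q_def Lw_def by (intro mult_left_mono) auto
          also have "\<dots> = \<epsilon>" using l2 by simp
          finally show ?thesis .
        qed
      qed
    qed
    show "\<exists>r h. strict_mono r \<and> h \<in> bloch \<beta> \<and>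
           (\<lambda>k. bloch_norm \<beta> (\<lambda>z. ?T (F (r k)) z - h z)) \<longlonglongrightarrow> 0"
    proof (intro exI conjI)
      show "strict_mono r" by (fact r)
      show "h \<in> bloch \<beta>" by (fact hb)
      show "(\<lambda>k. bloch_norm \<beta> (\<lambda>z. ?T (F (r k)) z - h z)) \<longlonglongrightarrow> 0"
        unfolding tendsto_iff dist_real_def
      proof (intro allI impI)
        fix e :: real assume e: "e > 0"
        have e2: "e / (2 * C) > 0" using e C by simp
        show "\<forall>\<^sub>F k in sequentially. \<bar>bloch_norm \<beta> (\<lambda>z. ?T (F (r k)) z - h z) - 0\<bar> < e"
        proof (rule eventually_mono[OF small[OF e2]])
          fix k assume sk: "\<forall>w\<in>disc. (1 - (cmod w)\<^sup>2) powr ?e * cmod (Hk k w) \<le> e / (2 * C)"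
          have H: "(intop ^^ n) (Hk k) \<in> bloch \<beta> \<and> bloch_norm \<beta> ((intop ^^ n) (Hk k)) \<le> C * (e / (2 * C))"
            by (rule HC[OF Hk_holo sk])
          have eqn: "bloch_norm \<beta> (\<lambda>z. ?T (F (r k)) z - h z) = bloch_norm \<beta> ((intop ^^ n) (Hk k))"
            by (rule bloch_norm_cong) (simp add: eqk)
          have "0 \<le> bloch_norm \<beta> ((intop ^^ n) (Hk k))" using H bloch_norm_nonneg by blast
          moreover have "C * (e / (2 * C)) < e" using C e by simp
          ultimately show "\<bar>bloch_norm \<beta> (\<lambda>z. ?T (F (r k)) z - h z) - 0\<bar> < e"
            unfolding eqn using H by simp
        qed
      qed
    qed
  qed
qed


theorem proposition4p1:
  fixes \<beta> :: real and n :: nat and g :: "complex \<Rightarrow> complex"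
  assumes "\<beta> > 0" and "n > 0" and "g holomorphic_on disc"
  shows "(bounded_bloch_op 1 \<beta> (\<lambda>f. (intop ^^ n) (\<lambda>z. f z * g z)) \<longleftrightarrow>
            bdd_above ((\<lambda>z. (1 - (cmod z)\<^sup>2) powr (real n + \<beta> - 1)
                          * ln (2 / (1 - (cmod z)\<^sup>2)) * cmod (g z)) ` disc))
       \<and> (compact_bloch_op 1 \<beta> (\<lambda>f. (intop ^^ n) (\<lambda>z. f z * g z)) \<longleftrightarrow>
            (\<forall>\<epsilon>>0. \<exists>r<1. \<forall>z. r < cmod z \<and> cmod z < 1 \<longrightarrow>
               (1 - (cmod z)\<^sup>2) powr (real n + \<beta> - 1)
                 * ln (2 / (1 - (cmod z)\<^sup>2)) * cmod (g z) < \<epsilon>))"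
proof (rule conjI)
  show "bounded_bloch_op 1 \<beta> (\<lambda>f. (intop ^^ n) (\<lambda>z. f z * g z)) \<longleftrightarrow>
            bdd_above ((\<lambda>z. (1 - (cmod z)\<^sup>2) powr (real n + \<beta> - 1)
                          * ln (2 / (1 - (cmod z)\<^sup>2)) * cmod (g z)) ` disc)"
  proof
    assume h: "bounded_bloch_op 1 \<beta> (\<lambda>f. (intop ^^ n) (\<lambda>z. f z * g z))"
    show "bdd_above ((\<lambda>z. (1 - (cmod z)\<^sup>2) powr (real n + \<beta> - 1)
                          * ln (2 / (1 - (cmod z)\<^sup>2)) * cmod (g z)) ` disc)"
      by (rule part1_nec[OF assms h])
  next
    assume h: "bdd_above ((\<lambda>z. (1 - (cmod z)\<^sup>2) powr (real n + \<beta> - 1)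
                          * ln (2 / (1 - (cmod z)\<^sup>2)) * cmod (g z)) ` disc)"
    show "bounded_bloch_op 1 \<beta> (\<lambda>f. (intop ^^ n) (\<lambda>z. f z * g z))"
      by (rule part1_suff[OF assms h])
  qed
  show "compact_bloch_op 1 \<beta> (\<lambda>f. (intop ^^ n) (\<lambda>z. f z * g z)) \<longleftrightarrow>
            (\<forall>\<epsilon>>0. \<exists>r<1. \<forall>z. r < cmod z \<and> cmod z < 1 \<longrightarrow>
               (1 - (cmod z)\<^sup>2) powr (real n + \<beta> - 1)
                 * ln (2 / (1 - (cmod z)\<^sup>2)) * cmod (g z) < \<epsilon>)"
  proof
    assume h: "compact_bloch_op 1 \<beta> (\<lambda>f. (intop ^^ n) (\<lambda>z. f z * g z))"
    show "\<forall>\<epsilon>>0. \<exists>r<1. \<forall>z. r < cmod z \<and> cmod z < 1 \<longrightarrow>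
               (1 - (cmod z)\<^sup>2) powr (real n + \<beta> - 1)
                 * ln (2 / (1 - (cmod z)\<^sup>2)) * cmod (g z) < \<epsilon>"
      by (rule part2_nec[OF assms h])
  next
    assume h: "\<forall>\<epsilon>>0. \<exists>r<1. \<forall>z. r < cmod z \<and> cmod z < 1 \<longrightarrow>
               (1 - (cmod z)\<^sup>2) powr (real n + \<beta> - 1)
                 * ln (2 / (1 - (cmod z)\<^sup>2)) * cmod (g z) < \<epsilon>"
    show "compact_bloch_op 1 \<beta> (\<lambda>f. (intop ^^ n) (\<lambda>z. f z * g z))"
      by (rule part2_suff[OF assms h])
  qed
qed

end
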